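(* Let $(G,t)$ be a non-trivial problem instance, $X$ a modulator of $G$, $C$ a connected component of $G-X$, $T$ the block-cut tree of $C$, and $B$ a block of $C$ that is a leaf of $T$ with unique neighbour $a$ in $T$. Let $W=N_G(V(B)\setminus\{a\})\setminus\{a\}$. Suppose $W$ is a limit-1 subset for $(G-V(B),t)$ and every $x\in W$ satisfies $\mathrm{tw}\big(G[V(B)\cup\{x\}]\cup\{ax\}\big)\le 2$. Let $G'$ be obtained from $G$ by contracting $B$ into $a$ (replacing $V(B)$ by the single vertex $a$ adjacent to all of $N_G(V(B))$). Then $(G,t)$ has a solution if and only if $(G',t)$ has a solution.
   Context: $\mathrm{tw}$ is treewidth. A solution for $(G,t)$ is $S\subseteq V(G)$ with $|S|\le t$ and $\mathrm{tw}(G-S)\le 2$. A modulator of $G$ is $X$ with $\mathrm{tw}(G-X)\le 2$. $Z$ is a limit-1 subset for $(G,t)$ if every solution $S$ has $|Z\setminus S|\le 1$. $(G,t)$ is trivial if $|V(G)|\le 4$, or $\mathrm{tw}(G)\le 2$, or $t=0$, or some connected subgraph $H$ satisfies $\mathrm{tw}\big(G[N_G[H]]\cup\binom{N_G(H)}{2}\big)\le 2$ ($N_G(H)$: vertices outside $H$ adjacent to $H$; $N_G[H]=V(H)\cup N_G(H)$; $\cup\binom{N_G(H)}{2}$ adds all edges among $N_G(H)$); otherwise non-trivial. For $U\subseteq V(G)$, $N_G(U)$ is the set of vertices outside $U$ adjacent to $U$. A block of a connected graph is a maximal biconnected subgraph (biconnected = connected without articulation vertex); the block-cut tree of a connected graph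 $C$ is the bipartite tree whose nodes are the articulation vertices of $C$ and the blocks of $C$, with articulation vertex $a$ adjacent to block $B$ iff $a\in V(B)$. For a graph $F$ and vertex pair $ax$, $F\cup\{ax\}$ is $F$ with edge $ax$ added. *)

theory Defs
  imports Main
begin

type_synonym 'a graph = "'a set \<times> 'a set set"

definition verts :: "'a graph \<Rightarrow> 'a set" where "verts G = fst G"
definition edges :: "'a graph \<Rightarrow> 'a set set" where "edges G = snd G"

definition wf_graph :: "'a graph \<Rightarrow> bool" where
  "wf_graph G \<longleftrightarrow> finite (verts G) \<and>
     (\<forall>e\<in>edges G. \<exists>u v. e = {u, v} \<and> u \<noteq> v \<and> u \<in> verts G \<and> v \<in> verts G)"

definition adj :: "'a graph \<Rightarrow> 'a \<Rightarrow> 'a \<Rightarrow> bool" where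
  "adj G u v \<longleftrightarrow> u \<noteq> v \<and> {u, v} \<in> edges G"

definition induce :: "'a graph \<Rightarrow> 'a set \<Rightarrow> 'a graph" where
  "induce G U = (verts G \<inter> U, {e \<in> edges G. e \<subseteq> U})"

definition del :: "'a graph \<Rightarrow> 'a set \<Rightarrow> 'a graph" where
  "del G S = induce G (verts G - S)"

text \<open>Connectivity (the empty graph counts as connected; nonemptiness is required explicitly where needed).\<close>
definition connected :: "'a graph \<Rightarrow> bool" where
  "connected G \<longleftrightarrow> (\<forall>u\<in>verts G. \<forall>v\<in>verts G. (adj G)\<^sup>*\<^sup>* u v)"

definition nbhd :: "'a graph \<Rightarrow> 'a set \<Rightarrow> 'a set" where
  "nbhd G U = {v \<in> verts G - U. \<exists>u\<in>U. adj G u v}"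

definition closed_nbhd :: "'a graph \<Rightarrow> 'a set \<Rightarrow> 'a set" where
  "closed_nbhd G U = (verts G \<inter> U) \<union> nbhd G U"

definition add_clique :: "'a graph \<Rightarrow> 'a set \<Rightarrow> 'a graph" where
  "add_clique G Z = (verts G, edges G \<union> {{u, v} | u v. u \<in> Z \<and> v \<in> Z \<and> u \<noteq> v})"

definition add_edge :: "'a graph \<Rightarrow> 'a \<Rightarrow> 'a \<Rightarrow> 'a graph" where
  "add_edge G a x = (verts G \<union> {a, x}, insert {a, x} (edges G))"

definition is_tree :: "nat graph \<Rightarrow> bool" where
  "is_tree T \<longleftrightarrow> wf_graph T \<and> verts T \<noteq> {} \<and> connected T \<and>
     card (edges T) = card (verts T) - 1"

definition tree_decomp :: "'a graph \<Rightarrow> nat graph \<Rightarrow> (nat \<Rightarrow> 'a set) \<Rightarrow> bool" where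
  "tree_decomp G T bag \<longleftrightarrow> is_tree T \<and>
     (\<forall>i\<in>verts T. bag i \<subseteq> verts G) \<and>
     (\<forall>v\<in>verts G. \<exists>i\<in>verts T. v \<in> bag i) \<and>
     (\<forall>e\<in>edges G. \<exists>i\<in>verts T. e \<subseteq> bag i) \<and>
     (\<forall>v\<in>verts G. connected (induce T {i. v \<in> bag i}))"

definition td_width :: "nat graph \<Rightarrow> (nat \<Rightarrow> 'a set) \<Rightarrow> nat" where
  "td_width T bag = Max ((\<lambda>i. card (bag i)) ` verts T) - 1"

definition treewidth :: "'a graph \<Rightarrow> nat" where
  "treewidth G = (LEAST k. \<exists>T bag. tree_decomp G T bag \<and> td_width T bag = k)"

definition solution :: "'a graph \<Rightarrow> nat \<Rightarrow> 'a set \<Rightarrow> bool" where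
  "solution G t S \<longleftrightarrow> S \<subseteq> verts G \<and> card S \<le> t \<and> treewidth (del G S) \<le> 2"

definition modulator :: "'a graph \<Rightarrow> 'a set \<Rightarrow> bool" where
  "modulator G X \<longleftrightarrow> treewidth (del G X) \<le> 2"

definition limit1 :: "'a graph \<Rightarrow> nat \<Rightarrow> 'a set \<Rightarrow> bool" where
  "limit1 G t Z \<longleftrightarrow> (\<forall>S. solution G t S \<longrightarrow> card (Z - S) \<le> 1)"

definition trivial_inst :: "'a graph \<Rightarrow> nat \<Rightarrow> bool" where
  "trivial_inst G t \<longleftrightarrow> card (verts G) \<le> 4 \<or> treewidth G \<le> 2 \<or> t = 0 \<or>
     (\<exists>H. H \<noteq> {} \<and> H \<subseteq> verts G \<and> connected (induce G H) \<and>
        treewidth (add_clique (induce G (closed_nbhd G H)) (nbhd G H)) \<le> 2)"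

definition component :: "'a graph \<Rightarrow> 'a set \<Rightarrow> bool" where
  "component G C \<longleftrightarrow> C \<noteq> {} \<and> C \<subseteq> verts G \<and> connected (induce G C) \<and>
     (\<forall>D. C \<subseteq> D \<and> D \<subseteq> verts G \<and> connected (induce G D) \<longrightarrow> D = C)"

text \<open>Articulation vertices, biconnectivity, blocks (blocks are maximal biconnected
  subgraphs; these are induced, so we represent them by their vertex sets).\<close>
definition articulation :: "'a graph \<Rightarrow> 'a \<Rightarrow> bool" where
  "articulation G v \<longleftrightarrow> v \<in> verts G \<and> \<not> connected (del G {v})"

definition biconnected :: "'a graph \<Rightarrow> bool" where
  "biconnected G \<longleftrightarrow> connected G \<and> (\<forall>v. \<not> articulation G v)"

definition is_block :: "'a graph \<Rightarrow> 'a set \<Rightarrow> bool" where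
  "is_block G U \<longleftrightarrow> U \<subseteq> verts G \<and> biconnected (induce G U) \<and>
     (\<forall>U'. U \<subseteq> U' \<and> U' \<subseteq> verts G \<and> biconnected (induce G U') \<longrightarrow> U' = U)"

definition bc_tree :: "'a graph \<Rightarrow> ('a + 'a set) graph" where
  "bc_tree G = ({Inl a | a. articulation G a} \<union> {Inr U | U. is_block G U},
               {{Inl a, Inr U} | a U. articulation G a \<and> is_block G U \<and> a \<in> U})"

definition contract :: "'a graph \<Rightarrow> 'a set \<Rightarrow> 'a \<Rightarrow> 'a graph" where
  "contract G B a = ((verts G - B) \<union> {a},
     {e \<in> edges G. e \<inter> B = {}} \<union> {{a, v} | v. v \<in> nbhd G B})"

end

theory Submission
  imports Defs
begin


lemma verts_pair[simp]: "verts (V,E) = V" by (simp add: verts_def)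
lemma edges_pair[simp]: "edges (V,E) = E" by (simp add: edges_def)

lemma verts_induce[simp]: "verts (induce G U) = verts G \<inter> U" by (simp add: induce_def)
lemma edges_induce[simp]: "edges (induce G U) = {e \<in> edges G. e \<subseteq> U}" by (simp add: induce_def)
lemma verts_del[simp]: "verts (del G S) = verts G - S" by (auto simp add: del_def)
lemma edges_del[simp]: "edges (del G S) = {e \<in> edges G. e \<subseteq> verts G - S}" by (simp add: del_def)
lemma verts_contract[simp]: "verts (contract G B a) = (verts G - B) \<union> {a}" by (simp add: contract_def)
lemma edges_contract[simp]: "edges (contract G B a) = {e \<in> edges G. e \<inter> B = {}} \<union> {{a, v} | v. v \<in> nbhd G B}" by (simp add: contract_def)
lemma verts_add_edge[simp]: "verts (add_edge G a x) = verts G \<union> {a, x}" by (simp add: add_edge_def)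
lemma edges_add_edge[simp]: "edges (add_edge G a x) = insert {a, x} (edges G)" by (simp add: add_edge_def)

lemma adj_sym: "adj H u v = adj H v u" by (auto simp: adj_def insert_commute)

lemma rtr_sym: "(adj H)\<^sup>*\<^sup>* u v \<Longrightarrow> (adj H)\<^sup>*\<^sup>* v u"
  by (induction rule: rtranclp_induct) (auto, metis adj_sym converse_rtranclp_into_rtranclp)

lemma rtr_map:
  assumes "R\<^sup>*\<^sup>* x y" "\<And>x y. R x y \<Longrightarrow> Q (f x) (f y)"
  shows "Q\<^sup>*\<^sup>* (f x) (f y)"
  using assms(1) by (induction rule: rtranclp_induct) (auto intro: rtranclp.rtrancl_into_rtrancl assms(2))

lemma connected_image:
  assumes "connected A" "\<And>x y. adj A x y \<Longrightarrow> adj H (f x) (f y)" "verts H \<subseteq> f ` verts A"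
  shows "connected H"
  unfolding connected_def
proof (intro ballI)
  fix u v assume "u \<in> verts H" "v \<in> verts H"
  then obtain x y where "x \<in> verts A" "y \<in> verts A" "u = f x" "v = f y" using assms(3) by blast
  then show "(adj H)\<^sup>*\<^sup>* u v" using assms(1) rtr_map[of "adj A" x y "adj H" f] assms(2)
    unfolding connected_def by blast
qed

lemma wf_edgeE:
  assumes "wf_graph G" "e \<in> edges G"
  obtains u v where "e = {u, v}" "u \<noteq> v" "u \<in> verts G" "v \<in> verts G"
proof -
  have "\<forall>e\<in>edges G. \<exists>u v. e = {u, v} \<and> u \<noteq> v \<and> u \<in> verts G \<and> v \<in> verts G"
    using assms(1) unfolding wf_graph_def by (rule conjunct2)
  then have "\<exists>u v. e = {u, v} \<and> u \<noteq> v \<and> u \<in> verts G \<and> v \<in> verts G" using assms(2) by (rule bspec)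
  then show ?thesis using that by blast
qed

lemma wf_edge_sub: "wf_graph G \<Longrightarrow> e \<in> edges G \<Longrightarrow> e \<subseteq> verts G"
  by (erule wf_edgeE) auto

lemma wf_finite_verts: "wf_graph G \<Longrightarrow> finite (verts G)"
  unfolding wf_graph_def by (rule conjunct1)

lemma wf_finite_edges: "wf_graph G \<Longrightarrow> finite (edges G)"
proof -
  assume w: "wf_graph G"
  have "edges G \<subseteq> Pow (verts G)" using wf_edge_sub[OF w] by blast
  moreover have "finite (Pow (verts G))" using wf_finite_verts[OF w] by simp
  ultimately show ?thesis by (rule finite_subset)
qed

definition good :: "'a graph \<Rightarrow> bool" where
  "good G \<longleftrightarrow> (\<exists>T bag. tree_decomp G T bag \<and> (\<forall>i\<in>verts T. card (bag i) \<le> 3))"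

lemma tree_single: "is_tree ({0::nat}, {})"
  unfolding is_tree_def wf_graph_def connected_def by auto

lemma decomp_exists: "wf_graph G \<Longrightarrow> tree_decomp G ({0}, {}) (\<lambda>_. verts G)"
  unfolding tree_decomp_def using tree_single
  by (auto simp: connected_def wf_edge_sub)

lemma td_width_le2:
  assumes "tree_decomp G T bag"
  shows "td_width T bag \<le> 2 \<longleftrightarrow> (\<forall>i\<in>verts T. card (bag i) \<le> 3)"
proof -
  have f: "finite (verts T)" "verts T \<noteq> {}" using assms unfolding tree_decomp_def is_tree_def wf_graph_def by auto
  have "td_width T bag \<le> 2 \<longleftrightarrow> Max ((\<lambda>i. card (bag i)) ` verts T) \<le> 3"
    unfolding td_width_def by auto
  also have "\<dots> \<longleftrightarrow> (\<forall>i\<in>verts T. card (bag i) \<le> 3)" using f by (simp add: Max_le_iff)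
  finally show ?thesis .
qed

lemma tw_good: assumes "wf_graph G" shows "treewidth G \<le> 2 \<longleftrightarrow> good G"
proof
  assume a: "treewidth G \<le> 2"
  have "\<exists>k T bag. tree_decomp G T bag \<and> td_width T bag = k" using decomp_exists[OF assms] by blast
  then have "\<exists>T bag. tree_decomp G T bag \<and> td_width T bag = treewidth G"
    unfolding treewidth_def by (rule LeastI_ex)
  then obtain T bag where "tree_decomp G T bag" "td_width T bag \<le> 2" using a by auto
  then show "good G" unfolding good_def using td_width_le2 by blast
next
  assume "good G"
  then obtain T bag where d: "tree_decomp G T bag" "\<forall>i\<in>verts T. card (bag i) \<le> 3" unfolding good_def by blast
  then have "td_width T bag \<le> 2" using td_width_le2 by blast
  moreover have "treewidth G \<le> td_width T bag" unfolding treewidth_def by (rule Least_le) (use d(1) in blast)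
  ultimately show "treewidth G \<le> 2" by simp
qed

definition subg :: "'a graph \<Rightarrow> 'a graph \<Rightarrow> bool" where
  "subg H G \<longleftrightarrow> verts H \<subseteq> verts G \<and> edges H \<subseteq> edges G"

lemma td_props:
  assumes "tree_decomp G T bag"
  shows "is_tree T" "\<And>i. i \<in> verts T \<Longrightarrow> bag i \<subseteq> verts G"
    "\<And>v. v \<in> verts G \<Longrightarrow> \<exists>i\<in>verts T. v \<in> bag i"
    "\<And>e. e \<in> edges G \<Longrightarrow> \<exists>i\<in>verts T. e \<subseteq> bag i"
    "\<And>v. v \<in> verts G \<Longrightarrow> connected (induce T {i. v \<in> bag i})"
  using assms unfolding tree_decomp_def by blast+

lemma good_sub:
  assumes "good G" "wf_graph G" "wf_graph H" "subg H G"
  shows "good H"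
proof -
  obtain T bag where d: "tree_decomp G T bag" "\<forall>i\<in>verts T. card (bag i) \<le> 3" using assms(1) unfolding good_def by blast
  note p = td_props[OF d(1)]
  have sv: "verts H \<subseteq> verts G" and se: "edges H \<subseteq> edges G" using assms(4) unfolding subg_def by auto
  define bag' where "bag' i = bag i \<inter> verts H" for i
  have fin: "finite (bag i)" if "i \<in> verts T" for i
    using p(2)[OF that] wf_finite_verts[OF assms(2)] by (rule finite_subset)
  have "tree_decomp H T bag'"
    unfolding tree_decomp_def
  proof (intro conjI ballI)
    show "is_tree T" by (rule p(1))
    show "bag' i \<subseteq> verts H" for i unfolding bag'_def by blast
    show "\<exists>i\<in>verts T. v \<in> bag' i" if vH: "v \<in> verts H" for v
    proof -
      obtain i where "i \<in> verts T" "v \<in> bag i" using p(3) vH sv by blast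
      then show ?thesis using that unfolding bag'_def by blast
    qed
    show "\<exists>i\<in>verts T. e \<subseteq> bag' i" if eH: "e \<in> edges H" for e
    proof -
      obtain i where "i \<in> verts T" "e \<subseteq> bag i" using p(4) eH se by blast
      moreover have "e \<subseteq> verts H" using wf_edge_sub[OF assms(3) that] .
      ultimately show ?thesis unfolding bag'_def by blast
    qed
    show "connected (induce T {i. v \<in> bag' i})" if "v \<in> verts H" for v
    proof -
      have "{i. v \<in> bag' i} = {i. v \<in> bag i}" using that unfolding bag'_def by blast
      moreover have "connected (induce T {i. v \<in> bag i})" using p(5) that sv by blast
      ultimately show ?thesis by simp
    qed
  qed
  moreover have "\<forall>i\<in>verts T. card (bag' i) \<le> 3"
  proof
    fix i assume i: "i \<in> verts T"
    have "card (bag' i) \<le> card (bag i)" unfolding bag'_def by (rule card_mono[OF fin[OF i]]) blast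
    then show "card (bag' i) \<le> 3" using d(2) i by auto
  qed
  ultimately show ?thesis unfolding good_def by blast
qed



lemma adj_induce_mono: "adj (induce T S) x y \<Longrightarrow> S \<subseteq> S' \<Longrightarrow> adj (induce T S') x y"
  by (auto simp: adj_def)

lemma good_contract:
  assumes w: "wf_graph G" and U: "U \<subseteq> verts G" "a \<in> U" and c: "connected (induce G U)"
    and g: "good G"
  shows "good (contract G U a)"
proof -
  obtain T bag where d: "tree_decomp G T bag" and cd: "\<forall>i\<in>verts T. card (bag i) \<le> 3"
    using g unfolding good_def by blast
  define bag' where "bag' i = (if bag i \<inter> U = {} then bag i else insert a (bag i - U))" for i
  have fin: "finite (bag i)" if "i \<in> verts T" for i
    using d that w unfolding tree_decomp_def wf_graph_def by (meson finite_subset)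
  have sub: "bag i \<subseteq> verts G" if "i \<in> verts T" for i using d that unfolding tree_decomp_def by blast
  have conn: "connected (induce T {i. v \<in> bag i})" if "v \<in> verts G" for v
    using d that unfolding tree_decomp_def by blast
  have ecov: "\<exists>i\<in>verts T. e \<subseteq> bag i" if "e \<in> edges G" for e
    using d that unfolding tree_decomp_def by blast
  have vcov: "\<exists>i\<in>verts T. v \<in> bag i" if "v \<in> verts G" for v
    using d that unfolding tree_decomp_def by blast
  let ?S = "\<lambda>u. {i. u \<in> bag i}"
  let ?A = "{i. a \<in> bag' i}"
  have Aeq: "?A = {i. bag i \<inter> U \<noteq> {}}" unfolding bag'_def using U(2) by auto
  have key: "(adj (induce T ?A))\<^sup>*\<^sup>* x y"
    if "(adj (induce G U))\<^sup>*\<^sup>* u w" "u \<in> U" "x \<in> verts T" "x \<in> ?S u" "y \<in> verts T" "y \<in> ?S w" for u w x y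
    using that
  proof (induction arbitrary: y rule: rtranclp_induct)
    case base
    have "u \<in> verts G" using U base by blast
    then have "(adj (induce T (?S u)))\<^sup>*\<^sup>* x y" using conn[of u] base unfolding connected_def by auto
    moreover have "?S u \<subseteq> ?A" using Aeq base by auto
    ultimately show ?case using rtr_map[of "adj (induce T (?S u))" x y "adj (induce T ?A)" id]
      adj_induce_mono by (metis id_apply)
  next
    case (step w w')
    have e: "{w, w'} \<in> edges G" "{w, w'} \<subseteq> U" using step(2) by (auto simp: adj_def)
    then obtain k where k: "k \<in> verts T" "{w, w'} \<subseteq> bag k" using ecov by blast
    have "(adj (induce T ?A))\<^sup>*\<^sup>* x k" using step k by auto
    moreover have "w' \<in> verts G" using e U by blast
    then have "(adj (induce T (?S w')))\<^sup>*\<^sup>* k y" using conn[of w'] k step.prems unfolding connected_def by auto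
    moreover have "?S w' \<subseteq> ?A" using Aeq e by auto
    ultimately show ?case using rtr_map[of "adj (induce T (?S w'))" k y "adj (induce T ?A)" id]
      adj_induce_mono by (metis id_apply rtranclp_trans)
  qed
  have "tree_decomp (contract G U a) T bag'"
    unfolding tree_decomp_def
  proof (intro conjI ballI)
    show "is_tree T" using d unfolding tree_decomp_def by blast
    show "bag' i \<subseteq> verts (contract G U a)" if "i \<in> verts T" for i
      using sub[OF that] unfolding bag'_def by auto
    show "\<exists>i\<in>verts T. v \<in> bag' i" if "v \<in> verts (contract G U a)" for v
    proof (cases "v = a")
      case True
      then obtain i where "i \<in> verts T" "a \<in> bag i" using vcov U by blast
      then show ?thesis using True U unfolding bag'_def by auto
    next
      case False
      then have "v \<in> verts G" "v \<notin> U" using that by auto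
      then show ?thesis using vcov unfolding bag'_def by fastforce
    qed
    show "\<exists>i\<in>verts T. e \<subseteq> bag' i" if "e \<in> edges (contract G U a)" for e
    proof -
      from that consider "e \<in> edges G" "e \<inter> U = {}" | v where "e = {a, v}" "v \<in> nbhd G U" by auto
      then show ?thesis
      proof cases
        case 1
        then obtain i where "i \<in> verts T" "e \<subseteq> bag i" using ecov by blast
        then show ?thesis using 1 unfolding bag'_def by auto
      next
        case 2
        then obtain u where u: "u \<in> U" "adj G u v" "v \<notin> U" unfolding nbhd_def by blast
        then obtain i where i: "i \<in> verts T" "{u, v} \<subseteq> bag i" using ecov unfolding adj_def by blast
        then show ?thesis using 2 u unfolding bag'_def by auto
      qed
    qed
    show "connected (induce T {i. v \<in> bag' i})" if "v \<in> verts (contract G U a)" for v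
    proof (cases "v = a")
      case True
      show ?thesis unfolding connected_def
      proof (intro ballI)
        fix x y assume xy: "x \<in> verts (induce T {i. v \<in> bag' i})" "y \<in> verts (induce T {i. v \<in> bag' i})"
        then obtain u w where "u \<in> U" "x \<in> ?S u" "w \<in> U" "y \<in> ?S w" "x \<in> verts T" "y \<in> verts T"
          using Aeq True by auto
        moreover have "(adj (induce G U))\<^sup>*\<^sup>* u w" using c \<open>u \<in> U\<close> \<open>w \<in> U\<close> U unfolding connected_def by auto
        ultimately show "(adj (induce T {i. v \<in> bag' i}))\<^sup>*\<^sup>* x y" using key True by blast
      qed
    next
      case False
      then have "v \<in> verts G" "v \<notin> U" using that by auto
      moreover have "{i. v \<in> bag' i} = ?S v" using False \<open>v \<notin> U\<close> unfolding bag'_def by auto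
      ultimately show ?thesis using conn by auto
    qed
  qed
  moreover have "\<forall>i\<in>verts T. card (bag' i) \<le> 3"
  proof
    fix i assume i: "i \<in> verts T"
    show "card (bag' i) \<le> 3"
    proof (cases "bag i \<inter> U = {}")
      case True then show ?thesis using cd i unfolding bag'_def by auto
    next
      case False
      have "bag i - U \<subset> bag i" using False by blast
      then have "card (bag i - U) < card (bag i)" by (rule psubset_card_mono[OF fin[OF i]])
      then have "card (insert a (bag i - U)) \<le> card (bag i)"
        using fin[OF i] by (simp add: card_insert_if)
      then show ?thesis using cd i False unfolding bag'_def by auto
    qed
  qed
  ultimately show ?thesis unfolding good_def by blast
qed



definition ev :: "nat \<Rightarrow> nat" where "ev i = 2 * i"
definition od :: "nat \<Rightarrow> nat" where "od i = 2 * i + 1"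

lemma inj_ev: "inj ev" by (auto simp: inj_def ev_def)
lemma inj_od: "inj od" by (auto simp: inj_def od_def)
lemma ev_od_ne[simp]: "ev x \<noteq> od y" "od y \<noteq> ev x" by (auto simp: ev_def od_def) presburger+
lemma ev_eq[simp]: "ev x = ev y \<longleftrightarrow> x = y" by (auto simp: ev_def)
lemma od_eq[simp]: "od x = od y \<longleftrightarrow> x = y" by (auto simp: od_def)
lemma ev_div[simp]: "ev i div 2 = i" "even (ev i)" by (auto simp: ev_def)
lemma od_div[simp]: "od i div 2 = i" "\<not> even (od i)" by (auto simp: od_def)

definition glueT :: "nat graph \<Rightarrow> nat graph \<Rightarrow> nat \<Rightarrow> nat \<Rightarrow> nat graph" where
  "glueT T1 T2 i1 i2 = (ev ` verts T1 \<union> od ` verts T2,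
     (image ev) ` edges T1 \<union> (image od) ` edges T2 \<union> {{ev i1, od i2}})"

lemma img_pair: "f ` {u, v} = {f u, f v}" by auto

lemma adj_ev: "adj T1 x y \<Longrightarrow> adj (glueT T1 T2 i1 i2) (ev x) (ev y)"
proof -
  assume "adj T1 x y"
  then have "x \<noteq> y" "{x, y} \<in> edges T1" unfolding adj_def by auto
  then have "{ev x, ev y} \<in> (image ev) ` edges T1" by (metis img_pair imageI)
  then show ?thesis unfolding adj_def glueT_def using \<open>x \<noteq> y\<close> by auto
qed
lemma adj_od: "adj T2 x y \<Longrightarrow> adj (glueT T1 T2 i1 i2) (od x) (od y)"
proof -
  assume "adj T2 x y"
  then have "x \<noteq> y" "{x, y} \<in> edges T2" unfolding adj_def by auto
  then have "{od x, od y} \<in> (image od) ` edges T2" by (metis img_pair imageI)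
  then show ?thesis unfolding adj_def glueT_def using \<open>x \<noteq> y\<close> by auto
qed

lemma wf_nonempty_edge: "wf_graph T \<Longrightarrow> e \<in> edges T \<Longrightarrow> e \<noteq> {}"
  unfolding wf_graph_def by auto

lemma glue_tree:
  assumes t1: "is_tree T1" and t2: "is_tree T2" and i: "i1 \<in> verts T1" "i2 \<in> verts T2"
  shows "is_tree (glueT T1 T2 i1 i2)"
proof -
  let ?T = "glueT T1 T2 i1 i2"
  have w1: "wf_graph T1" and w2: "wf_graph T2" using t1 t2 unfolding is_tree_def by auto
  have fv1: "finite (verts T1)" and fv2: "finite (verts T2)" using w1 w2 unfolding wf_graph_def by auto
  have fe1: "finite (edges T1)" by (rule wf_finite_edges[OF w1])
  have fe2: "finite (edges T2)" by (rule wf_finite_edges[OF w2])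
  have wf: "wf_graph ?T"
    unfolding wf_graph_def
  proof (intro conjI ballI)
    show "finite (verts ?T)" using fv1 fv2 unfolding glueT_def by simp
    fix e assume "e \<in> edges ?T"
    then consider (a) e' where "e' \<in> edges T1" "e = ev ` e'" | (b) e' where "e' \<in> edges T2" "e = od ` e'"
      | (c) "e = {ev i1, od i2}" unfolding glueT_def by auto
    then show "\<exists>u v. e = {u, v} \<and> u \<noteq> v \<and> u \<in> verts ?T \<and> v \<in> verts ?T"
    proof cases
      case a
      then obtain u v where "e' = {u,v}" "u \<noteq> v" "u \<in> verts T1" "v \<in> verts T1" using wf_edgeE[OF w1] by metis
      then show ?thesis using a by (intro exI[of _ "ev u"] exI[of _ "ev v"]) (auto simp: glueT_def)
    next
      case b
      then obtain u v where "e' = {u,v}" "u \<noteq> v" "u \<in> verts T2" "v \<in> verts T2" using wf_edgeE[OF w2] by metis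
      then show ?thesis using b by (intro exI[of _ "od u"] exI[of _ "od v"]) (auto simp: glueT_def)
    next
      case c then show ?thesis using i by (intro exI[of _ "ev i1"] exI[of _ "od i2"]) (auto simp: glueT_def)
    qed
  qed
  have hub: "(adj ?T)\<^sup>*\<^sup>* (ev i1) x" if "x \<in> verts ?T" for x
  proof -
    from that consider (a) y where "y \<in> verts T1" "x = ev y" | (b) y where "y \<in> verts T2" "x = od y"
      unfolding glueT_def by auto
    then show ?thesis
    proof cases
      case a
      then have "(adj T1)\<^sup>*\<^sup>* i1 y" using t1 i unfolding is_tree_def connected_def by blast
      then show ?thesis using rtr_map[of "adj T1" i1 y "adj ?T" ev] adj_ev a by blast
    next
      case b
      then have "(adj T2)\<^sup>*\<^sup>* i2 y" using t2 i unfolding is_tree_def connected_def by blast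
      then have "(adj ?T)\<^sup>*\<^sup>* (od i2) x" using rtr_map[of "adj T2" i2 y "adj ?T" od] adj_od b by blast
      moreover have "adj ?T (ev i1) (od i2)" unfolding adj_def glueT_def by auto
      ultimately show ?thesis by (meson converse_rtranclp_into_rtranclp)
    qed
  qed
  have conn: "connected ?T" unfolding connected_def
    using hub rtr_sym by (meson rtranclp_trans)
  have ne: "verts ?T \<noteq> {}" using i unfolding glueT_def by auto
  have cv: "card (verts ?T) = card (verts T1) + card (verts T2)"
  proof -
    have "ev ` verts T1 \<inter> od ` verts T2 = {}" by auto
    then have "card (verts ?T) = card (ev ` verts T1) + card (od ` verts T2)"
      unfolding glueT_def using fv1 fv2 by (simp add: card_Un_disjoint)
    then show ?thesis using card_image inj_ev inj_od by (metis inj_on_subset subset_UNIV)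
  qed
  have ce: "card (edges ?T) = card (edges T1) + card (edges T2) + 1"
  proof -
    have d1: "(image ev) ` edges T1 \<inter> (image od) ` edges T2 = {}"
    proof (rule ccontr)
      assume "\<not> ?thesis"
      then obtain e1 e2 where "e1 \<in> edges T1" "e2 \<in> edges T2" "ev ` e1 = od ` e2" by blast
      moreover then obtain x where "x \<in> e1" using wf_nonempty_edge w1 by blast
      ultimately show False by (metis (no_types, opaque_lifting) ev_od_ne(1) image_eqI imageE)
    qed
    have d2: "{ev i1, od i2} \<notin> (image ev) ` edges T1 \<union> (image od) ` edges T2"
      by (auto, metis ev_od_ne(1) image_iff insertI1 insertI2, metis ev_od_ne(1) image_iff insertI1)
    have "card ((image ev) ` edges T1) = card (edges T1)"
      by (rule card_image) (simp add: inj_on_def inj_image_eq_iff[OF inj_ev])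
    moreover have "card ((image od) ` edges T2) = card (edges T2)"
      by (rule card_image) (simp add: inj_on_def inj_image_eq_iff[OF inj_od])
    ultimately show ?thesis unfolding glueT_def using d1 d2 fe1 fe2
      by (simp add: card_Un_disjoint)
  qed
  have "card (edges T1) = card (verts T1) - 1" "card (edges T2) = card (verts T2) - 1"
    using t1 t2 unfolding is_tree_def by auto
  moreover have "card (verts T1) \<ge> 1" "card (verts T2) \<ge> 1" using fv1 fv2 i
    by (auto simp: Suc_le_eq card_gt_0_iff)
  ultimately have "card (edges ?T) = card (verts ?T) - 1" using ce cv by simp
  then show ?thesis unfolding is_tree_def using wf conn ne by blast
qed



lemma good_glue:
  assumes w1: "wf_graph G1" and w2: "wf_graph G2" and g1: "good G1" and g2: "good G2"
    and K1: "\<And>T bag. tree_decomp G1 T bag \<Longrightarrow> \<exists>i\<in>verts T. K \<subseteq> bag i"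
    and K2: "\<And>T bag. tree_decomp G2 T bag \<Longrightarrow> \<exists>i\<in>verts T. K \<subseteq> bag i"
    and I: "verts G1 \<inter> verts G2 \<subseteq> K"
  shows "good (verts G1 \<union> verts G2, edges G1 \<union> edges G2)"
proof -
  obtain T1 bag1 where d1: "tree_decomp G1 T1 bag1" and c1: "\<forall>i\<in>verts T1. card (bag1 i) \<le> 3"
    using g1 unfolding good_def by blast
  obtain T2 bag2 where d2: "tree_decomp G2 T2 bag2" and c2: "\<forall>i\<in>verts T2. card (bag2 i) \<le> 3"
    using g2 unfolding good_def by blast
  obtain i1 where i1: "i1 \<in> verts T1" "K \<subseteq> bag1 i1" using K1[OF d1] by blast
  obtain i2 where i2: "i2 \<in> verts T2" "K \<subseteq> bag2 i2" using K2[OF d2] by blast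
  note p1 = td_props[OF d1] and p2 = td_props[OF d2]
  let ?G = "(verts G1 \<union> verts G2, edges G1 \<union> edges G2)"
  define T where "T = glueT T1 T2 i1 i2"
  define bag where "bag j = (if even j then bag1 (j div 2) else bag2 (j div 2))" for j
  have be[simp]: "bag (ev x) = bag1 x" for x unfolding bag_def by simp
  have bo[simp]: "bag (od x) = bag2 x" for x unfolding bag_def by simp
  have vT: "verts T = ev ` verts T1 \<union> od ` verts T2" unfolding T_def glueT_def by simp
  have sub1: "bag1 i \<subseteq> verts G1" if "i \<in> verts T1" for i using p1(2) that by blast
  have sub2: "bag2 i \<subseteq> verts G2" if "i \<in> verts T2" for i using p2(2) that by blast
  have "tree_decomp ?G T bag"
    unfolding tree_decomp_def
  proof (intro conjI ballI)
    show "is_tree T" unfolding T_def by (rule glue_tree[OF p1(1) p2(1) i1(1) i2(1)])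
    show "bag j \<subseteq> verts ?G" if "j \<in> verts T" for j using that sub1 sub2 unfolding vT by fastforce
    show "\<exists>j\<in>verts T. v \<in> bag j" if "v \<in> verts ?G" for v
    proof -
      from that have "v \<in> verts G1 \<or> v \<in> verts G2" by simp
      then show ?thesis
      proof
        assume "v \<in> verts G1"
        then obtain i where "i \<in> verts T1" "v \<in> bag1 i" using p1 by blast
        then show ?thesis unfolding vT by (intro bexI[of _ "ev i"]) auto
      next
        assume "v \<in> verts G2"
        then obtain i where "i \<in> verts T2" "v \<in> bag2 i" using p2 by blast
        then show ?thesis unfolding vT by (intro bexI[of _ "od i"]) auto
      qed
    qed
    show "\<exists>j\<in>verts T. e \<subseteq> bag j" if "e \<in> edges ?G" for e
    proof -
      from that have "e \<in> edges G1 \<or> e \<in> edges G2" by simp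
      then show ?thesis
      proof
        assume "e \<in> edges G1"
        then obtain i where "i \<in> verts T1" "e \<subseteq> bag1 i" using p1 by blast
        then show ?thesis unfolding vT by (intro bexI[of _ "ev i"]) auto
      next
        assume "e \<in> edges G2"
        then obtain i where "i \<in> verts T2" "e \<subseteq> bag2 i" using p2 by blast
        then show ?thesis unfolding vT by (intro bexI[of _ "od i"]) auto
      qed
    qed
    show "connected (induce T {j. v \<in> bag j})" if v: "v \<in> verts ?G" for v
    proof -
      let ?S = "{j. v \<in> bag j}" and ?S1 = "{j. v \<in> bag1 j}" and ?S2 = "{j. v \<in> bag2 j}"
      let ?R = "adj (induce T ?S)"
      have m1: "?R (ev x) (ev y)" if h: "adj (induce T1 ?S1) x y" for x y
      proof -
        have "adj T1 x y" "v \<in> bag1 x" "v \<in> bag1 y" using h by (auto simp: adj_def)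
        then have "adj T (ev x) (ev y)" using adj_ev[of T1 x y T2 i1 i2] unfolding T_def by blast
        then show ?thesis using \<open>v \<in> bag1 x\<close> \<open>v \<in> bag1 y\<close> by (simp add: adj_def)
      qed
      have m2: "?R (od x) (od y)" if h: "adj (induce T2 ?S2) x y" for x y
      proof -
        have "adj T2 x y" "v \<in> bag2 x" "v \<in> bag2 y" using h by (auto simp: adj_def)
        then have "adj T (od x) (od y)" using adj_od[of T2 x y T1 i1 i2] unfolding T_def by blast
        then show ?thesis using \<open>v \<in> bag2 x\<close> \<open>v \<in> bag2 y\<close> by (simp add: adj_def)
      qed
      have P1: "?R\<^sup>*\<^sup>* (ev x) (ev y)" if "x \<in> verts T1" "x \<in> ?S1" "y \<in> verts T1" "y \<in> ?S1" for x y
      proof -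
        have "v \<in> verts G1" using that sub1 by blast
        then have "connected (induce T1 ?S1)" using p1 by blast
        then have "(adj (induce T1 ?S1))\<^sup>*\<^sup>* x y" using that unfolding connected_def by auto
        then show ?thesis using rtr_map[of "adj (induce T1 ?S1)" x y ?R ev] m1 by blast
      qed
      have P2: "?R\<^sup>*\<^sup>* (od x) (od y)" if "x \<in> verts T2" "x \<in> ?S2" "y \<in> verts T2" "y \<in> ?S2" for x y
      proof -
        have "v \<in> verts G2" using that sub2 by blast
        then have "connected (induce T2 ?S2)" using p2 by blast
        then have "(adj (induce T2 ?S2))\<^sup>*\<^sup>* x y" using that unfolding connected_def by auto
        then show ?thesis using rtr_map[of "adj (induce T2 ?S2)" x y ?R od] m2 by blast
      qed
      have P3: "?R\<^sup>*\<^sup>* (ev x) (od y)" if "x \<in> verts T1" "x \<in> ?S1" "y \<in> verts T2" "y \<in> ?S2" for x y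
      proof -
        have "v \<in> K" using that sub1 sub2 I by blast
        then have k: "i1 \<in> ?S1" "i2 \<in> ?S2" using i1 i2 by auto
        have "{ev i1, od i2} \<in> edges T" unfolding T_def glueT_def by simp
        then have "?R (ev i1) (od i2)" using k by (simp add: adj_def)
        then show ?thesis using P1[OF that(1,2) i1(1) k(1)] P2[OF i2(1) k(2) that(3,4)]
          by (meson converse_rtranclp_into_rtranclp rtranclp_trans)
      qed
      show ?thesis unfolding connected_def
      proof (intro ballI)
        fix u w assume uw: "u \<in> verts (induce T ?S)" "w \<in> verts (induce T ?S)"
        have cases: "(\<exists>x. x \<in> verts T1 \<and> x \<in> ?S1 \<and> z = ev x) \<or> (\<exists>y. y \<in> verts T2 \<and> y \<in> ?S2 \<and> z = od y)"
          if "z \<in> verts (induce T ?S)" for z using that by (auto simp: vT)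
        show "?R\<^sup>*\<^sup>* u w"
          using cases[OF uw(1)]
        proof (elim disjE exE conjE)
          fix x assume x: "x \<in> verts T1" "x \<in> ?S1" "u = ev x"
          show ?thesis using cases[OF uw(2)]
          proof (elim disjE exE conjE)
            fix y assume "y \<in> verts T1" "y \<in> ?S1" "w = ev y"
            then show ?thesis using P1 x by blast
          next
            fix y assume "y \<in> verts T2" "y \<in> ?S2" "w = od y"
            then show ?thesis using P3 x by blast
          qed
        next
          fix x assume x: "x \<in> verts T2" "x \<in> ?S2" "u = od x"
          show ?thesis using cases[OF uw(2)]
          proof (elim disjE exE conjE)
            fix y assume "y \<in> verts T1" "y \<in> ?S1" "w = ev y"
            then have "?R\<^sup>*\<^sup>* (ev y) (od x)" using P3 x by blast
            then show ?thesis using rtr_sym \<open>w = ev y\<close> x(3) by metis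
          next
            fix y assume "y \<in> verts T2" "y \<in> ?S2" "w = od y"
            then show ?thesis using P2 x by blast
          qed
        qed
      qed
    qed
  qed
  moreover have "\<forall>j\<in>verts T. card (bag j) \<le> 3" unfolding vT using c1 c2 by auto
  ultimately show ?thesis unfolding good_def by blast
qed

lemma K_small:
  assumes "tree_decomp G T bag" "K \<subseteq> verts G" "card K \<le> 1" "finite K"
  shows "\<exists>i\<in>verts T. K \<subseteq> bag i"
proof (cases "K = {}")
  case True
  have "verts T \<noteq> {}" using td_props(1)[OF assms(1)] unfolding is_tree_def by blast
  then show ?thesis using True by auto
next
  case False
  then obtain x where "K = {x}" using assms(3,4) by (metis card_1_singletonE card_0_eq le_SucE le_zero_eq One_nat_def)
  then show ?thesis using td_props(3)[OF assms(1)] assms(2) by auto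
qed

lemma K_edge:
  assumes "tree_decomp G T bag" "K \<in> edges G"
  shows "\<exists>i\<in>verts T. K \<subseteq> bag i"
  using td_props(4)[OF assms(1)] assms(2) by blast



lemma wf_induce: assumes w: "wf_graph G" shows "wf_graph (induce G U)"
  unfolding wf_graph_def
proof (intro conjI ballI)
  show "finite (verts (induce G U))" using wf_finite_verts[OF w] by simp
  fix e assume "e \<in> edges (induce G U)"
  then have e: "e \<in> edges G" "e \<subseteq> U" by auto
  obtain u v where "e = {u, v}" "u \<noteq> v" "u \<in> verts G" "v \<in> verts G" using wf_edgeE[OF w e(1)] by blast
  then show "\<exists>u v. e = {u, v} \<and> u \<noteq> v \<and> u \<in> verts (induce G U) \<and> v \<in> verts (induce G U)"
    using e(2) by auto
qed

lemma wf_del: "wf_graph G \<Longrightarrow> wf_graph (del G S)"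
  unfolding del_def by (rule wf_induce)

lemma wf_contract: assumes w: "wf_graph G" and aB: "a \<in> B" shows "wf_graph (contract G B a)"
  unfolding wf_graph_def
proof (intro conjI ballI)
  show "finite (verts (contract G B a))" using wf_finite_verts[OF w] by simp
  fix e assume "e \<in> edges (contract G B a)"
  then consider "e \<in> edges G" "e \<inter> B = {}" | v where "e = {a, v}" "v \<in> nbhd G B" by auto
  then show "\<exists>u v. e = {u, v} \<and> u \<noteq> v \<and> u \<in> verts (contract G B a) \<and> v \<in> verts (contract G B a)"
  proof cases
    case 1
    obtain u v where "e = {u, v}" "u \<noteq> v" "u \<in> verts G" "v \<in> verts G" using wf_edgeE[OF w 1(1)] by blast
    then show ?thesis using 1(2) by (intro exI[of _ u] exI[of _ v]) auto
  next
    case 2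
    then have "v \<in> verts G" "v \<notin> B" unfolding nbhd_def by auto
    then show ?thesis using 2(1) aB by (intro exI[of _ a] exI[of _ v]) auto
  qed
qed

lemma wf_add_edge: assumes w: "wf_graph G" and ax: "a \<noteq> x" shows "wf_graph (add_edge G a x)"
  unfolding wf_graph_def
proof (intro conjI ballI)
  show "finite (verts (add_edge G a x))" using wf_finite_verts[OF w] by simp
  fix e assume "e \<in> edges (add_edge G a x)"
  then consider "e \<in> edges G" | "e = {a, x}" by auto
  then show "\<exists>u v. e = {u, v} \<and> u \<noteq> v \<and> u \<in> verts (add_edge G a x) \<and> v \<in> verts (add_edge G a x)"
  proof cases
    case 1
    obtain u v where "e = {u, v}" "u \<noteq> v" "u \<in> verts G" "v \<in> verts G" using wf_edgeE[OF w 1(1)] by blast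
    then show ?thesis by (intro exI[of _ u] exI[of _ v]) auto
  next
    case 2
    then show ?thesis using ax by (intro exI[of _ a] exI[of _ x]) auto
  qed
qed

lemma wf_union: assumes w1: "wf_graph G1" and w2: "wf_graph G2"
  shows "wf_graph (verts G1 \<union> verts G2, edges G1 \<union> edges G2)"
  unfolding wf_graph_def
proof (intro conjI ballI)
  show "finite (verts (verts G1 \<union> verts G2, edges G1 \<union> edges G2))"
    using wf_finite_verts[OF w1] wf_finite_verts[OF w2] by simp
  fix e assume "e \<in> edges (verts G1 \<union> verts G2, edges G1 \<union> edges G2)"
  then consider "e \<in> edges G1" | "e \<in> edges G2" by auto
  then show "\<exists>u v. e = {u, v} \<and> u \<noteq> v \<and> u \<in> verts (verts G1 \<union> verts G2, edges G1 \<union> edges G2)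
     \<and> v \<in> verts (verts G1 \<union> verts G2, edges G1 \<union> edges G2)"
  proof cases
    case 1
    obtain u v where "e = {u, v}" "u \<noteq> v" "u \<in> verts G1" "v \<in> verts G1" using wf_edgeE[OF w1 1] by blast
    then show ?thesis by (intro exI[of _ u] exI[of _ v]) auto
  next
    case 2
    obtain u v where "e = {u, v}" "u \<noteq> v" "u \<in> verts G2" "v \<in> verts G2" using wf_edgeE[OF w2 2] by blast
    then show ?thesis by (intro exI[of _ u] exI[of _ v]) auto
  qed
qed

lemma tw_sub: "wf_graph G \<Longrightarrow> wf_graph H \<Longrightarrow> subg H G \<Longrightarrow> good G \<Longrightarrow> treewidth H \<le> 2"
  using good_sub tw_good by blast



lemma forward:
  assumes w: "wf_graph G" and aB: "a \<in> B" and BV: "B \<subseteq> verts G" and cB: "connected (induce G B)"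
    and sol: "solution G t S"
  shows "\<exists>S'. solution (contract G B a) t S'"
proof -
  let ?G' = "contract G B a"
  have SV: "S \<subseteq> verts G" and cS: "card S \<le> t" and twS: "treewidth (del G S) \<le> 2"
    using sol unfolding solution_def by auto
  have fS: "finite S" using SV wf_finite_verts[OF w] by (rule finite_subset)
  have gS: "good (del G S)" using twS tw_good[OF wf_del[OF w]] by blast
  have wG': "wf_graph ?G'" by (rule wf_contract[OF w aB])
  have eV: "e \<subseteq> verts G" if "e \<in> edges G" for e using wf_edge_sub[OF w that] .
  show ?thesis
  proof (cases "S \<inter> B = {}")
    case True
    have ind: "induce (del G S) B = induce G B"
    proof -
      have "verts (del G S) \<inter> B = verts G \<inter> B" using True by auto
      moreover have "{e \<in> edges (del G S). e \<subseteq> B} = {e \<in> edges G. e \<subseteq> B}"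
        using True eV by auto
      ultimately show ?thesis unfolding induce_def by simp
    qed
    have gc: "good (contract (del G S) B a)"
      by (rule good_contract[OF wf_del[OF w] _ aB _ gS]) (use BV True ind cB in auto)
    have sub: "subg (del ?G' S) (contract (del G S) B a)"
      unfolding subg_def
    proof
      show "verts (del ?G' S) \<subseteq> verts (contract (del G S) B a)" by auto
      show "edges (del ?G' S) \<subseteq> edges (contract (del G S) B a)"
      proof
        fix e assume e: "e \<in> edges (del ?G' S)"
        then have eS: "e \<subseteq> verts ?G' - S" by simp
        from e consider "e \<in> edges G" "e \<inter> B = {}" | v where "e = {a, v}" "v \<in> nbhd G B" by auto
        then show "e \<in> edges (contract (del G S) B a)"
        proof cases
          case 1
          then show ?thesis using eS eV[OF 1(1)] by auto
        next
          case 2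
          then obtain u where u: "u \<in> B" "adj G u v" "v \<in> verts G" "v \<notin> B" unfolding nbhd_def by blast
          have "v \<notin> S" using eS 2(1) by auto
          then have "v \<in> nbhd (del G S) B" unfolding nbhd_def using u True BV
            by (auto simp: adj_def)
          then show ?thesis using 2(1) by auto
        qed
      qed
    qed
    have "treewidth (del ?G' S) \<le> 2"
      by (rule tw_sub[OF wf_contract[OF wf_del[OF w] aB] wf_del[OF wG'] sub gc])
    moreover have "S \<subseteq> verts ?G'" using SV True by auto
    ultimately show ?thesis using cS unfolding solution_def by blast
  next
    case False
    let ?S' = "insert a (S - B)"
    have "S - B \<subset> S" using False by blast
    then have "card (S - B) < card S" by (rule psubset_card_mono[OF fS])
    then have cS': "card ?S' \<le> t" using cS card_insert_le_m1
      by (metis card_insert_if finite_Diff fS Suc_leI le_trans less_imp_le_nat)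
    have sub: "subg (del ?G' ?S') (del G S)"
      unfolding subg_def
    proof
      show "verts (del ?G' ?S') \<subseteq> verts (del G S)" by auto
      show "edges (del ?G' ?S') \<subseteq> edges (del G S)"
      proof
        fix e assume e: "e \<in> edges (del ?G' ?S')"
        then have eS: "e \<subseteq> verts ?G' - ?S'" by simp
        from e consider "e \<in> edges G" "e \<inter> B = {}" | v where "e = {a, v}" "v \<in> nbhd G B" by auto
        then show "e \<in> edges (del G S)"
        proof cases
          case 1
          then show ?thesis using eS eV[OF 1(1)] by auto
        next
          case 2
          then show ?thesis using eS by auto
        qed
      qed
    qed
    have "treewidth (del ?G' ?S') \<le> 2"
      by (rule tw_sub[OF wf_del[OF w] wf_del[OF wG'] sub gS])
    moreover have "?S' \<subseteq> verts ?G'" using SV by auto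
    ultimately show ?thesis using cS' unfolding solution_def by blast
  qed
qed



lemma backward:
  assumes w: "wf_graph G" and aB: "a \<in> B" and BV: "B \<subseteq> verts G" and twB: "good (induce G B)"
    and lim: "card (nbhd G (B - {a}) - {a} - S) \<le> 1"
    and hyp: "\<forall>x \<in> nbhd G (B - {a}) - {a}. treewidth (add_edge (induce G (B \<union> {x})) a x) \<le> 2"
    and sol: "solution (contract G B a) t S"
  shows "solution G t S"
proof -
  let ?G' = "contract G B a"
  define W where "W = nbhd G (B - {a}) - {a}"
  have SV': "S \<subseteq> verts ?G'" and cS: "card S \<le> t" and twS: "treewidth (del ?G' S) \<le> 2"
    using sol unfolding solution_def by auto
  have SV: "S \<subseteq> verts G" using SV' aB BV by auto
  have wG': "wf_graph ?G'" by (rule wf_contract[OF w aB])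
  have w1: "wf_graph (del ?G' S)" by (rule wf_del[OF wG'])
  have g1: "good (del ?G' S)" using twS tw_good[OF w1] by blast
  have eV: "e \<subseteq> verts G" if "e \<in> edges G" for e using wf_edge_sub[OF w that] .
  have WV: "W \<subseteq> verts G - B" unfolding W_def nbhd_def by auto
  have fW: "finite (W - S)" using WV wf_finite_verts[OF w] by (meson finite_Diff finite_subset Diff_subset_conv le_supI2 order_refl)
  have limW: "card (W - S) \<le> 1" using lim unfolding W_def .
  have Wnb: "v \<in> W" if "u \<in> B" "u \<noteq> a" "{u, v} \<in> edges G" "u \<noteq> v" "v \<notin> B" for u v
    unfolding W_def nbhd_def using that aB eV[OF that(3)] by (auto simp: adj_def)
  have nbB: "v \<in> nbhd G B" if "u \<in> B" "{u, v} \<in> edges G" "u \<noteq> v" "v \<notin> B" for u v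
    unfolding nbhd_def using that eV[OF that(2)] by (auto simp: adj_def)
  have WnbB: "v \<in> nbhd G B" if "v \<in> W" for v
    using that unfolding W_def nbhd_def by auto
  show ?thesis unfolding solution_def
  proof (intro conjI)
    show "S \<subseteq> verts G" by (rule SV)
    show "card S \<le> t" by (rule cS)
    have wD: "wf_graph (del G S)" by (rule wf_del[OF w])
    have glue: "treewidth (del G S) \<le> 2"
      if w2: "wf_graph G2" and g2: "good G2"
        and K1: "\<And>T bag. tree_decomp (del ?G' S) T bag \<Longrightarrow> \<exists>i\<in>verts T. K \<subseteq> bag i"
        and K2: "\<And>T bag. tree_decomp G2 T bag \<Longrightarrow> \<exists>i\<in>verts T. K \<subseteq> bag i"
        and I: "verts (del ?G' S) \<inter> verts G2 \<subseteq> K"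
        and sv: "verts G - S \<subseteq> verts (del ?G' S) \<union> verts G2"
        and se: "\<And>e. e \<in> edges G \<Longrightarrow> e \<subseteq> verts G - S \<Longrightarrow> e \<in> edges (del ?G' S) \<or> e \<in> edges G2"
      for G2 K
    proof -
      have gg: "good (verts (del ?G' S) \<union> verts G2, edges (del ?G' S) \<union> edges G2)"
        by (rule good_glue[OF w1 w2 g1 g2 K1 K2 I])
      have "subg (del G S) (verts (del ?G' S) \<union> verts G2, edges (del ?G' S) \<union> edges G2)"
        unfolding subg_def using sv se by auto
      then show ?thesis using tw_sub[OF wf_union[OF w1 w2] wD _ gg] by blast
    qed
    have e1: "e \<in> edges (del ?G' S)" if "e \<in> edges G" "e \<subseteq> verts G - S" "e \<inter> B = {}" for e
      using that by auto
    have e1a: "{a, v} \<in> edges (del ?G' S)" if "v \<in> nbhd G B" "a \<notin> S" "v \<notin> S" for v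
    proof -
      have "{a, v} \<in> edges ?G'" using that(1) by auto
      moreover have "v \<in> verts G - B" using that(1) unfolding nbhd_def by auto
      ultimately show ?thesis using that by auto
    qed
    have card01: "W - S = {} \<or> (\<exists>x. W - S = {x})" using limW fW
      by (metis card_1_singletonE card_0_eq le_SucE le_zero_eq One_nat_def)
    show "treewidth (del G S) \<le> 2"
    proof (cases "a \<in> S")
      case aS: True
      let ?G2 = "induce G ((B - {a}) \<union> (W - S))"
      have g2: "good ?G2"
        using card01
      proof
        assume "W - S = {}"
        then have "subg ?G2 (induce G B)" unfolding subg_def by auto
        then show ?thesis using good_sub[OF twB wf_induce[OF w] wf_induce[OF w]] by blast
      next
        assume "\<exists>x. W - S = {x}"
        then obtain x where x: "W - S = {x}" by blast
        then have xW: "x \<in> W" by auto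
        then have xa: "a \<noteq> x" unfolding W_def by auto
        have wx: "wf_graph (add_edge (induce G (B \<union> {x})) a x)" by (rule wf_add_edge[OF wf_induce[OF w] xa])
        have "good (add_edge (induce G (B \<union> {x})) a x)"
          using hyp xW tw_good[OF wx] unfolding W_def by blast
        moreover have "subg ?G2 (add_edge (induce G (B \<union> {x})) a x)" unfolding subg_def using x by auto
        ultimately show ?thesis using good_sub[OF _ wx wf_induce[OF w]] by blast
      qed
      show ?thesis
      proof (rule glue[OF wf_induce[OF w] g2])
        show "\<exists>i\<in>verts T. W - S \<subseteq> bag i" if "tree_decomp (del ?G' S) T bag" for T bag
          by (rule K_small[OF that _ limW fW]) (use WV in auto)
        show "\<exists>i\<in>verts T. W - S \<subseteq> bag i" if "tree_decomp ?G2 T bag" for T bag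
          by (rule K_small[OF that _ limW fW]) (use WV in auto)
        show "verts (del ?G' S) \<inter> verts ?G2 \<subseteq> W - S" using aS by auto
        show "verts G - S \<subseteq> verts (del ?G' S) \<union> verts ?G2" using aS by auto
        have half: "{u, v} \<in> edges (del ?G' S) \<or> {u, v} \<in> edges ?G2"
          if "{u, v} \<in> edges G" "{u, v} \<subseteq> verts G - S" "u \<noteq> v" "u \<in> B" for u v
        proof (cases "v \<in> B")
          case True
          then show ?thesis using that aS by auto
        next
          case False
          then have "v \<in> W" using Wnb[OF that(4) _ that(1,3) False] that aS by auto
          then show ?thesis using that aS by auto
        qed
        show "e \<in> edges (del ?G' S) \<or> e \<in> edges ?G2" if he: "e \<in> edges G" "e \<subseteq> verts G - S" for e
        proof -
          obtain u v where uv: "e = {u, v}" "u \<noteq> v" using wf_edgeE[OF w he(1)] by metis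
          show ?thesis
          proof (cases "e \<inter> B = {}")
            case True then show ?thesis using e1 he by blast
          next
            case False
            then have "u \<in> B \<or> v \<in> B" using uv by auto
            then show ?thesis
            proof
              assume "u \<in> B" then show ?thesis using half uv he by blast
            next
              assume "v \<in> B" then show ?thesis using half[of v u] uv he by (simp add: insert_commute)
            qed
          qed
        qed
      qed
    next
      case aS: False
      show ?thesis
        using card01
      proof
        assume W0: "W - S = {}"
        show ?thesis
        proof (rule glue[OF wf_induce[OF w] twB])
          show "\<exists>i\<in>verts T. {a} \<subseteq> bag i" if "tree_decomp (del ?G' S) T bag" for T bag
            by (rule K_small[OF that]) (use aS in auto)
          show "\<exists>i\<in>verts T. {a} \<subseteq> bag i" if "tree_decomp (induce G B) T bag" for T bag
            by (rule K_small[OF that]) (use aB BV in auto)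
          show "verts (del ?G' S) \<inter> verts (induce G B) \<subseteq> {a}" by auto
          show "verts G - S \<subseteq> verts (del ?G' S) \<union> verts (induce G B)" by auto
          have half: "{u, v} \<in> edges (del ?G' S) \<or> {u, v} \<in> edges (induce G B)"
            if "{u, v} \<in> edges G" "{u, v} \<subseteq> verts G - S" "u \<noteq> v" "u \<in> B" for u v
          proof (cases "v \<in> B")
            case True
            then show ?thesis using that by auto
          next
            case False
            show ?thesis
            proof (cases "u = a")
              case True
              then have "{u, v} \<in> edges (del ?G' S)" using e1a[OF nbB[OF that(4,1,3) False] aS] that by auto
              then show ?thesis by blast
            next
              case False
              then have "v \<in> W" using Wnb[OF that(4) _ that(1,3)] \<open>v \<notin> B\<close> by auto
              then show ?thesis using W0 that by auto
            qed
          qed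
          show "e \<in> edges (del ?G' S) \<or> e \<in> edges (induce G B)" if he: "e \<in> edges G" "e \<subseteq> verts G - S" for e
          proof -
            obtain u v where uv: "e = {u, v}" "u \<noteq> v" using wf_edgeE[OF w he(1)] by metis
            show ?thesis
            proof (cases "e \<inter> B = {}")
              case True then show ?thesis using e1 he by blast
            next
              case False
              then have "u \<in> B \<or> v \<in> B" using uv by auto
              then show ?thesis
              proof
                assume "u \<in> B" then show ?thesis using half uv he by blast
              next
                assume "v \<in> B" then show ?thesis using half[of v u] uv he by (simp add: insert_commute)
              qed
            qed
          qed
        qed
      next
        assume "\<exists>x. W - S = {x}"
        then obtain x where x: "W - S = {x}" by blast
        then have xW: "x \<in> W" and xS: "x \<notin> S" by auto
        then have xa: "a \<noteq> x" unfolding W_def by auto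
        have xB: "x \<notin> B" "x \<in> verts G" using xW WV by auto
        let ?G2 = "add_edge (induce G (B \<union> {x})) a x"
        have wx: "wf_graph ?G2" by (rule wf_add_edge[OF wf_induce[OF w] xa])
        have gx: "good ?G2"
          using hyp xW tw_good[OF wx] unfolding W_def by blast
        show ?thesis
        proof (rule glue[OF wx gx])
          show "\<exists>i\<in>verts T. {a, x} \<subseteq> bag i" if "tree_decomp (del ?G' S) T bag" for T bag
            by (rule K_edge[OF that]) (use e1a[OF WnbB[OF xW] aS xS] in auto)
          show "\<exists>i\<in>verts T. {a, x} \<subseteq> bag i" if "tree_decomp ?G2 T bag" for T bag
            by (rule K_edge[OF that]) auto
          show "verts (del ?G' S) \<inter> verts ?G2 \<subseteq> {a, x}" by auto
          show "verts G - S \<subseteq> verts (del ?G' S) \<union> verts ?G2" by auto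
          have half: "{u, v} \<in> edges (del ?G' S) \<or> {u, v} \<in> edges ?G2"
            if "{u, v} \<in> edges G" "{u, v} \<subseteq> verts G - S" "u \<noteq> v" "u \<in> B" for u v
          proof (cases "v \<in> B")
            case True
            then show ?thesis using that by auto
          next
            case False
            show ?thesis
            proof (cases "u = a")
              case True
              then have "{u, v} \<in> edges (del ?G' S)" using e1a[OF nbB[OF that(4,1,3) False] aS] that by auto
              then show ?thesis by blast
            next
              case False
              then have "v \<in> W" using Wnb[OF that(4) _ that(1,3)] \<open>v \<notin> B\<close> by auto
              then have "v = x" using x that by auto
              then show ?thesis using that by auto
            qed
          qed
          show "e \<in> edges (del ?G' S) \<or> e \<in> edges ?G2" if he: "e \<in> edges G" "e \<subseteq> verts G - S" for e
          proof -
            obtain u v where uv: "e = {u, v}" "u \<noteq> v" using wf_edgeE[OF w he(1)] by metis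
            show ?thesis
            proof (cases "e \<inter> B = {}")
              case True then show ?thesis using e1 he by blast
            next
              case False
              then have "u \<in> B \<or> v \<in> B" using uv by auto
              then show ?thesis
              proof
                assume "u \<in> B" then show ?thesis using half uv he by blast
              next
                assume "v \<in> B" then show ?thesis using half[of v u] uv he by (simp add: insert_commute)
              qed
            qed
          qed
        qed
      qed
    qed
  qed
qed



theorem mainTheorem16:
  fixes G :: "'a graph" and t :: nat and X C B :: "'a set" and a :: 'a
  assumes "wf_graph G"
    and "\<not> trivial_inst G t"
    and "modulator G X"
    and "component (del G X) C"
    and "is_block (induce G C) B"
    and "Inr B \<in> verts (bc_tree (induce G C))"
    and "{n. adj (bc_tree (induce G C)) (Inr B) n} = {Inl a}"
    and "limit1 (del G B) t (nbhd G (B - {a}) - {a})"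
    and "\<forall>x \<in> nbhd G (B - {a}) - {a}. treewidth (add_edge (induce G (B \<union> {x})) a x) \<le> 2"
  shows "(\<exists>S. solution G t S) \<longleftrightarrow> (\<exists>S. solution (contract G B a) t S)"
proof -
  note w = assms(1)
  have "adj (bc_tree (induce G C)) (Inr B) (Inl a)" using assms(7) by blast
  then have "{Inr B, Inl a} \<in> edges (bc_tree (induce G C))" unfolding adj_def by blast
  then obtain a' U where "{Inr B, Inl a} = {Inl a', Inr U}" "a' \<in> U" "U = B \<or> True"
    unfolding bc_tree_def by auto
  then have aB: "a \<in> B" by (auto simp: doubleton_eq_iff)
  have BC: "B \<subseteq> C" and BV: "B \<subseteq> verts G" using assms(5) unfolding is_block_def by auto
  have CX: "C \<subseteq> verts G - X" using assms(4) unfolding component_def by auto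
  have ii: "induce (induce G C) B = induce G B"
    unfolding induce_def using BC by auto
  have cB: "connected (induce G B)"
    using assms(5) unfolding is_block_def biconnected_def ii by blast
  have gX: "good (del G X)" using assms(3) tw_good[OF wf_del[OF w]] unfolding modulator_def by blast
  have "subg (induce G B) (del G X)" unfolding subg_def using BC CX by auto
  then have twB: "good (induce G B)" using good_sub[OF gX wf_del[OF w] wf_induce[OF w]] by blast
  show ?thesis
  proof
    assume "\<exists>S. solution G t S"
    then obtain S where "solution G t S" by blast
    then show "\<exists>S. solution (contract G B a) t S" by (rule forward[OF w aB BV cB])
  next
    assume "\<exists>S. solution (contract G B a) t S"
    then obtain S where sol: "solution (contract G B a) t S" by blast
    let ?G' = "contract G B a"
    have SV': "S \<subseteq> verts ?G'" and cS: "card S \<le> t" and twS: "treewidth (del ?G' S) \<le> 2"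
      using sol unfolding solution_def by auto
    have fS: "finite S" using SV' wf_finite_verts[OF wf_contract[OF w aB]] by (rule finite_subset)
    have g1: "good (del ?G' S)" using twS tw_good[OF wf_del[OF wf_contract[OF w aB]]] by blast
    have sub: "subg (del (del G B) (S - {a})) (del ?G' S)"
      unfolding subg_def
    proof
      show "verts (del (del G B) (S - {a})) \<subseteq> verts (del ?G' S)" using aB by auto
      show "edges (del (del G B) (S - {a})) \<subseteq> edges (del ?G' S)"
      proof
        fix e assume "e \<in> edges (del (del G B) (S - {a}))"
        then have "e \<in> edges G" "e \<subseteq> verts G - B - (S - {a})" by auto
        then show "e \<in> edges (del ?G' S)" using aB by auto
      qed
    qed
    have "solution (del G B) t (S - {a})" unfolding solution_def
    proof (intro conjI)
      show "S - {a} \<subseteq> verts (del G B)" using SV' by auto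
      show "card (S - {a}) \<le> t" using cS card_Diff1_le[of S a] by linarith
      show "treewidth (del (del G B) (S - {a})) \<le> 2"
        by (rule tw_sub[OF wf_del[OF wf_contract[OF w aB]] wf_del[OF wf_del[OF w]] sub g1])
    qed
    then have l: "card (nbhd G (B - {a}) - {a} - (S - {a})) \<le> 1" using assms(8) unfolding limit1_def by blast
    have "nbhd G (B - {a}) - {a} - (S - {a}) = nbhd G (B - {a}) - {a} - S" by auto
    then have lim: "card (nbhd G (B - {a}) - {a} - S) \<le> 1" using l by simp
    show "\<exists>S. solution G t S" using backward[OF w aB BV twB lim assms(9) sol] by blast
  qed
qed

end
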